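(* Let $(b,c)$ be a locally finite, connected graph over a countable set $X$ on which $\mathbb{Z}^d$ acts freely and cocompactly such that $H_{b,c}$ is $\mathbb{Z}^d$-invariant, and fix $x_0\in X$. Then $\rho:\mathcal{M}_{(-\infty,\lambda_0]}\to\mathbb{R}^d$ is a homeomorphism (with the topology of pointwise convergence on $\mathcal{M}_{(-\infty,\lambda_0]}$). Moreover, for every $\lambda\in\mathbb{R}$ the sets $\mathcal{M}_{[\lambda,\lambda_0]}$ and $\mathcal{A}_{[\lambda,\lambda_0]}=\rho(\mathcal{M}_{[\lambda,\lambda_0]})$ are compact.
   Context: A graph over $X$ is $(b,c)$ with $b:X\times X\to[0,\infty)$, $c:X\to\mathbb{R}$, $\sum_yb(x,y)<\infty$ ($b$ need not be symmetric); locally finite and connected as usual ($x\sim y$ iff $b(x,y)>0$). $H_{b,c}f(x)=\sum_yb(x,y)(f(x)-f(y))+c(x)f(x)$ on $\mathrm{Dom}(H)=\{f:\sum_yb(x,y)|f(y)|<\infty\ \forall x\}$; $f$ is $\lambda$-harmonic if $(H-\lambda)f=0$. $T_gf(x)=f(g^{-1}x)$; $H$ is $\mathbb{Z}^d$-invariant if $T_g$ preserves $\mathrm{Dom}(H)$ and $HT_g=T_gH$. $f$ is multiplicative with character $\gamma_f$ if $\gamma_f:\mathbb{Z}^d\to(0,\infty)$ is a homomorphism with $f(zx)=\gamma_f(z)f(x)$. $\mathcal{K}_\lambda$ is the pointwise closure of $\{f\ge0,\ f\not\equiv0,\ \lambda\text{-harmonic},\ f(x_0)=1\}$, $\mathcal{M}_\lambda$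 its multiplicative elements, $\mathcal{M}_I=\bigcup_{\lambda\in I}\mathcal{M}_\lambda$. $\rho(f)=\alpha\in\mathbb{R}^d$ where $\log\gamma_f(z)=\langle\alpha,z\rangle$ for all $z\in\mathbb{Z}^d$. $\lambda_0=\sup\{\lambda:\mathcal{M}_\lambda\neq\emptyset\}$ (finite, and $\mathcal{M}_\lambda=\emptyset$ for $\lambda>\lambda_0$). *)

theory Defs
  imports "HOL-Analysis.Analysis"
begin

definition Dom :: "('x \<Rightarrow> 'x \<Rightarrow> real) \<Rightarrow> ('x \<Rightarrow> real) set" where
  "Dom b = {f. \<forall>x. (\<lambda>y. b x y * \<bar>f y\<bar>) summable_on UNIV}"

definition Hop :: "('x \<Rightarrow> 'x \<Rightarrow> real) \<Rightarrow> ('x \<Rightarrow> real) \<Rightarrow> ('x \<Rightarrow> real) \<Rightarrow> 'x \<Rightarrow> real" where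
  "Hop b c f x = (\<Sum>\<^sub>\<infinity>y. b x y * (f x - f y)) + c x * f x"

definition Tact :: "(int^'d \<Rightarrow> 'x \<Rightarrow> 'x) \<Rightarrow> int^'d \<Rightarrow> ('x \<Rightarrow> real) \<Rightarrow> 'x \<Rightarrow> real" where
  "Tact act g f = (\<lambda>x. f (act (- g) x))"

definition Hinvariant :: "('x \<Rightarrow> 'x \<Rightarrow> real) \<Rightarrow> ('x \<Rightarrow> real) \<Rightarrow> (int^'d \<Rightarrow> 'x \<Rightarrow> 'x) \<Rightarrow> bool" where
  "Hinvariant b c act \<longleftrightarrow> (\<forall>g f. f \<in> Dom b \<longrightarrow>
      Tact act g f \<in> Dom b \<and> Hop b c (Tact act g f) = Tact act g (Hop b c f))"

definition harmonic :: "('x \<Rightarrow> 'x \<Rightarrow> real) \<Rightarrow> ('x \<Rightarrow> real) \<Rightarrow> real \<Rightarrow> ('x \<Rightarrow> real) \<Rightarrow> bool" where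
  "harmonic b c l f \<longleftrightarrow> f \<in> Dom b \<and> (\<forall>x. Hop b c f x - l * f x = 0)"

text \<open>Pointwise closure = closure in the product topology on 'x \<Rightarrow> real.\<close>
definition Kset :: "('x \<Rightarrow> 'x \<Rightarrow> real) \<Rightarrow> ('x \<Rightarrow> real) \<Rightarrow> 'x \<Rightarrow> real \<Rightarrow> ('x \<Rightarrow> real) set" where
  "Kset b c x0 l = closure {f. (\<forall>x. 0 \<le> f x) \<and> f \<noteq> (\<lambda>_. 0) \<and> harmonic b c l f \<and> f x0 = 1}"

definition is_character :: "(int^'d \<Rightarrow> real) \<Rightarrow> bool" where
  "is_character \<gamma> \<longleftrightarrow> (\<forall>z. 0 < \<gamma> z) \<and> (\<forall>z w. \<gamma> (z + w) = \<gamma> z * \<gamma> w)"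

definition multiplicative :: "(int^'d \<Rightarrow> 'x \<Rightarrow> 'x) \<Rightarrow> ('x \<Rightarrow> real) \<Rightarrow> (int^'d \<Rightarrow> real) \<Rightarrow> bool" where
  "multiplicative act f \<gamma> \<longleftrightarrow> is_character \<gamma> \<and> (\<forall>z x. f (act z x) = \<gamma> z * f x)"

definition Mset :: "('x \<Rightarrow> 'x \<Rightarrow> real) \<Rightarrow> ('x \<Rightarrow> real) \<Rightarrow> (int^'d \<Rightarrow> 'x \<Rightarrow> 'x) \<Rightarrow> 'x \<Rightarrow> real \<Rightarrow> ('x \<Rightarrow> real) set" where
  "Mset b c act x0 l = {f \<in> Kset b c x0 l. \<exists>\<gamma>. multiplicative act f \<gamma>}"

definition MI :: "('x \<Rightarrow> 'x \<Rightarrow> real) \<Rightarrow> ('x \<Rightarrow> real) \<Rightarrow> (int^'d \<Rightarrow> 'x \<Rightarrow> 'x) \<Rightarrow> 'x \<Rightarrow> real set \<Rightarrow> ('x \<Rightarrow> real) set" where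
  "MI b c act x0 I = (\<Union>l\<in>I. Mset b c act x0 l)"

definition rho :: "(int^'d \<Rightarrow> 'x \<Rightarrow> 'x) \<Rightarrow> ('x \<Rightarrow> real) \<Rightarrow> real^'d" where
  "rho act f = (THE \<alpha>. \<exists>\<gamma>. multiplicative act f \<gamma> \<and>
      (\<forall>z. ln (\<gamma> z) = (\<Sum>i\<in>UNIV. \<alpha> $ i * real_of_int (z $ i))))"

definition lambda0 :: "('x \<Rightarrow> 'x \<Rightarrow> real) \<Rightarrow> ('x \<Rightarrow> real) \<Rightarrow> (int^'d \<Rightarrow> 'x \<Rightarrow> 'x) \<Rightarrow> 'x \<Rightarrow> real" where
  "lambda0 b c act x0 = Sup {l. Mset b c act x0 l \<noteq> {}}"

end

theory Submission
  imports Defs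
begin

locale ctx =
  fixes b :: "'x::countable \<Rightarrow> 'x \<Rightarrow> real" and c :: "'x \<Rightarrow> real"
    and act :: "int^'d \<Rightarrow> 'x \<Rightarrow> 'x" and x0 :: 'x
  assumes b_nonneg: "\<And>x y. 0 \<le> b x y"
    and loc_finite: "\<And>x. finite {y. 0 < b x y \<or> 0 < b y x}"
    and connected: "\<And>x y. (x, y) \<in> {(u, v). 0 < b u v}\<^sup>*"
    and act_zero: "\<And>x. act 0 x = x"
    and act_add: "\<And>z w x. act (z + w) x = act z (act w x)"
    and act_free: "\<And>z x. act z x = x \<Longrightarrow> z = 0"
    and cocompact: "\<exists>F. finite F \<and> (\<forall>x. \<exists>z. \<exists>y\<in>F. x = act z y)"
    and invariant: "Hinvariant b c act"
begin

definition nb :: "'x \<Rightarrow> 'x set" where "nb x = {y. 0 < b x y \<or> 0 < b y x}"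
definition BB :: "'x \<Rightarrow> 'x \<Rightarrow> real" where "BB x y = (if x = y then 0 else b x y)"
definition Sf :: "('x \<Rightarrow> real) \<Rightarrow> 'x \<Rightarrow> real" where "Sf f x = (\<Sum>y\<in>nb x. BB x y * f y)"
definition E :: "'x \<Rightarrow> real" where "E x = (\<Sum>y\<in>nb x. BB x y) + c x"

lemma fin_nb: "finite (nb x)" using loc_finite by (simp add: nb_def)
lemma BB_nonneg: "0 \<le> BB x y" by (simp add: BB_def b_nonneg)
lemma BB_diag[simp]: "BB x x = 0" by (simp add: BB_def)
lemma b_pos_nb: "0 < b x y \<Longrightarrow> y \<in> nb x" by (simp add: nb_def)
lemma BB_zero: "y \<notin> nb x \<Longrightarrow> BB x y = 0"
  using b_nonneg[of x y] by (auto simp: nb_def BB_def)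

lemma act_inv1[simp]: "act (- g) (act g x) = x"
  by (metis act_add act_zero add.left_inverse)
lemma act_inv2[simp]: "act g (act (- g) x) = x"
  by (metis act_add act_zero add.right_inverse)
lemma act_inj: "inj (act g)"
  by (metis act_inv1 injI)
lemma act_eq_iff[simp]: "act g x = act g y \<longleftrightarrow> x = y"
  using act_inj[of g] by (auto dest: injD)

lemma Sf_gen:
  assumes "finite A" "\<And>y. BB x y \<noteq> 0 \<Longrightarrow> y \<in> A"
  shows "Sf f x = (\<Sum>y\<in>A. BB x y * f y)"
proof -
  have "Sf f x = (\<Sum>y\<in>nb x \<union> A. BB x y * f y)"
    unfolding Sf_def by (rule sum.mono_neutral_left[of "nb x \<union> A" "nb x"]) (auto simp: fin_nb assms BB_zero)
  also have "\<dots> = (\<Sum>y\<in>A. BB x y * f y)"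
    by (rule sum.mono_neutral_right[of "nb x \<union> A" A]) (use assms in \<open>auto simp: fin_nb\<close>)
  finally show ?thesis .
qed

lemma Hop_eq: "Hop b c f x = E x * f x - Sf f x"
proof -
  have "(\<Sum>\<^sub>\<infinity>y. b x y * (f x - f y)) = (\<Sum>\<^sub>\<infinity>y\<in>nb x. b x y * (f x - f y))"
    by (rule infsum_cong_neutral) (auto simp: nb_def dest: order.antisym[OF _ b_nonneg] simp: not_less)
  also have "\<dots> = (\<Sum>y\<in>nb x. b x y * (f x - f y))" by (simp add: fin_nb)
  also have "\<dots> = (\<Sum>y\<in>nb x. BB x y * (f x - f y))"
    by (rule sum.cong) (auto simp: BB_def)
  also have "\<dots> = f x * (\<Sum>y\<in>nb x. BB x y) - Sf f x"
    by (simp add: Sf_def algebra_simps sum_subtractf sum_distrib_left)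
  finally show ?thesis by (simp add: Hop_def E_def algebra_simps)
qed

lemma Dom_UNIV: "f \<in> Dom b"
proof -
  have "(\<lambda>y. b x y * \<bar>f y\<bar>) summable_on UNIV \<longleftrightarrow> (\<lambda>y. b x y * \<bar>f y\<bar>) summable_on nb x" for x
    by (rule summable_on_cong_neutral) (auto simp: nb_def dest: order.antisym[OF _ b_nonneg] simp: not_less)
  then show ?thesis by (simp add: Dom_def fin_nb)
qed

lemma harmonic_iff: "harmonic b c l f \<longleftrightarrow> (\<forall>x. Sf f x = (E x - l) * f x)"
  by (auto simp: harmonic_def Dom_UNIV Hop_eq algebra_simps)

lemma Sf_ind: "Sf (\<lambda>w. if w = y then 1 else 0) x = BB x y"
proof -
  have "Sf (\<lambda>w. if w = y then 1 else 0) x = (\<Sum>w\<in>nb x \<union> {y}. BB x w * (if w = y then 1 else 0))"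
    by (rule Sf_gen) (auto simp: fin_nb BB_zero)
  also have "\<dots> = (\<Sum>w\<in>nb x \<union> {y}. if w = y then BB x y else 0)" by (rule sum.cong) auto
  also have "\<dots> = BB x y" by (simp add: fin_nb)
  finally show ?thesis .
qed

lemma Hop_ind: "Hop b c (\<lambda>w. if w = y then 1 else 0) x = (if x = y then E x else - BB x y)"
  by (simp add: Hop_eq Sf_ind)

lemma inv_basic: "Hop b c (\<lambda>w. if w = act g y then 1 else 0) (act g x) = Hop b c (\<lambda>w. if w = y then 1 else 0) x"
proof -
  have "Hop b c (Tact act g (\<lambda>w. if w = y then 1 else 0)) = Tact act g (Hop b c (\<lambda>w. if w = y then 1 else 0))"
    using invariant Dom_UNIV by (auto simp: Hinvariant_def)
  moreover have "Tact act g (\<lambda>w. if w = y then 1 else 0) = (\<lambda>w. if w = act g y then 1 else 0)"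
    unfolding Tact_def by (rule ext) (metis act_inv1 act_inv2)
  ultimately show ?thesis by (metis Tact_def act_inv1)
qed

lemma BB_act[simp]: "BB (act g x) (act g y) = BB x y"
  using inv_basic[of g y x] by (auto simp: Hop_ind split: if_splits)

lemma E_act[simp]: "E (act g x) = E x"
  using inv_basic[of g x x] by (simp add: Hop_ind)

lemma Sf_act: "Sf (\<lambda>w. f (act g w)) x = Sf f (act g x)"
proof -
  have "Sf f (act g x) = (\<Sum>y\<in>act g ` nb x. BB (act g x) y * f y)"
    by (rule Sf_gen) (auto simp: fin_nb intro!: image_eqI[where x="act (-g) _"] dest: BB_zero[rotated]
         | metis BB_act BB_zero act_inv2)+
  also have "\<dots> = (\<Sum>y\<in>nb x. BB x y * f (act g y))"
    by (subst sum.reindex) (auto simp: inj_on_def)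
  finally show ?thesis by (simp add: Sf_def)
qed


lemma Sf_lin: "Sf (\<lambda>x. a * f x + a' * g x) y = a * Sf f y + a' * Sf g y"
  by (simp add: Sf_def sum.distrib sum_distrib_left algebra_simps)
lemma Sf_scale: "Sf (\<lambda>x. a * f x) y = a * Sf f y"
  by (simp add: Sf_def sum_distrib_left algebra_simps)
lemma Sf_diff: "Sf (\<lambda>x. f x - g x) y = Sf f y - Sf g y"
  by (simp add: Sf_def sum_subtractf algebra_simps)
lemma Sf_mono: "(\<And>x. f x \<le> g x) \<Longrightarrow> Sf f y \<le> Sf g y"
  unfolding Sf_def by (intro sum_mono mult_left_mono) (auto simp: BB_nonneg)
lemma Sf_nonneg: "(\<And>x. 0 \<le> f x) \<Longrightarrow> 0 \<le> Sf f y"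
  unfolding Sf_def by (intro sum_nonneg mult_nonneg_nonneg) (auto simp: BB_nonneg)
lemma Sf_single: assumes "\<And>x. 0 \<le> f x" shows "BB x y * f y \<le> Sf f x"
proof (cases "y \<in> nb x")
  case True
  then show ?thesis unfolding Sf_def
    by (intro member_le_sum[where f="\<lambda>y. BB x y * f y"]) (auto simp: fin_nb BB_nonneg assms)
next
  case False
  then show ?thesis using Sf_nonneg[OF assms] by (simp add: BB_zero)
qed

lemma cont_Sf:
  assumes "continuous_on S h"
  shows "continuous_on S (\<lambda>p. Sf (h p) x)"
proof -
  have "continuous_on S (\<lambda>p. h p y)" for y
    using assms by (rule continuous_on_product_then_coordinatewise)
  then show ?thesis unfolding Sf_def by (intro continuous_intros) auto
qed

lemma cont_app:
  assumes "continuous_on S h"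
  shows "continuous_on S (\<lambda>p. h p y)"
  using assms by (rule continuous_on_product_then_coordinatewise)

lemma zero_prop:
  assumes nn: "\<And>x. 0 \<le> h x" and sub: "\<And>x. Sf h x \<le> (E x - l) * h x" and z: "h x = 0"
  shows "h y = 0"
  using connected[of x y]
proof (induction rule: rtrancl_induct)
  case base
  then show ?case using z .
next
  case (step u v)
  show ?case
  proof (cases "u = v")
    case True then show ?thesis using step by simp
  next
    case False
    with step have "0 < BB u v" by (simp add: BB_def)
    moreover have "BB u v * h v \<le> Sf h u" by (rule Sf_single) (rule nn)
    moreover have "Sf h u \<le> 0" using sub[of u] step by simp
    ultimately show ?thesis using nn[of v] by (smt (verit) mult_pos_pos)
  qed
qed

definition Kp :: "real \<Rightarrow> ('x \<Rightarrow> real) set" where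
  "Kp l = {f. (\<forall>x. 0 \<le> f x) \<and> f x0 = 1 \<and> (\<forall>x. Sf f x = (E x - l) * f x)}"

lemma Kp_pos: assumes "f \<in> Kp l" shows "0 < f x"
proof -
  have "f x \<noteq> 0"
  proof
    assume "f x = 0"
    then have "f x0 = 0" using assms by (intro zero_prop[of f l x x0]) (auto simp: Kp_def)
    then show False using assms by (simp add: Kp_def)
  qed
  then show ?thesis using assms by (auto simp: Kp_def order.order_iff_strict)
qed

lemma closed_Kp: "closed (Kp l)"
proof -
  have eq: "Kp l = (\<Inter>x. {f. 0 \<le> f x}) \<inter> {f. f x0 = 1} \<inter> (\<Inter>x. {f. Sf f x = (E x - l) * f x})"
    by (auto simp: Kp_def)
  have c1: "continuous_on UNIV (\<lambda>f::'x\<Rightarrow>real. f y)" for y by simp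
  have c2: "continuous_on UNIV (\<lambda>f::'x\<Rightarrow>real. Sf f y)" for y
    using cont_Sf[of UNIV "\<lambda>f. f" y] by simp
  have "closed ((\<Inter>x. {f. 0 \<le> f x}) \<inter> {f. f x0 = 1} \<inter> (\<Inter>x. {f. Sf f x = (E x - l) * f x}))"
    by (intro closed_Int closed_INT ballI closed_Collect_le closed_Collect_eq c1 c2 continuous_on_const continuous_on_mult)
  then show ?thesis using eq by simp
qed

lemma Kset_eq: "Kset b c x0 l = Kp l"
proof -
  have "{f. (\<forall>x. 0 \<le> f x) \<and> f \<noteq> (\<lambda>_. 0) \<and> harmonic b c l f \<and> f x0 = 1} = Kp l"
    by (auto simp: Kp_def harmonic_iff)
  then show ?thesis by (simp add: Kset_def closed_Kp)
qed

definition Mult :: "('x \<Rightarrow> real) \<Rightarrow> bool" where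
  "Mult f \<longleftrightarrow> (\<forall>z x. f (act z x) = f (act z x0) * f x)"

lemma Mult_iff: assumes "f \<in> Kp l" shows "(\<exists>\<gamma>. multiplicative act f \<gamma>) \<longleftrightarrow> Mult f"
proof
  assume "\<exists>\<gamma>. multiplicative act f \<gamma>"
  then obtain \<gamma> where g: "\<And>z x. f (act z x) = \<gamma> z * f x" by (auto simp: multiplicative_def)
  have x0: "f x0 = 1" using assms by (simp add: Kp_def)
  have "\<gamma> z = f (act z x0)" for z using g[of z x0] x0 by simp
  then show "Mult f" unfolding Mult_def using g by metis
next
  assume m: "Mult f"
  then have m': "\<And>z x. f (act z x) = f (act z x0) * f x" unfolding Mult_def by blast
  have "is_character (\<lambda>z. f (act z x0))"
    unfolding is_character_def using Kp_pos[OF assms] m' act_add by metis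
  then have "multiplicative act f (\<lambda>z. f (act z x0))"
    using m' unfolding multiplicative_def by blast
  then show "\<exists>\<gamma>. multiplicative act f \<gamma>" by blast
qed

lemma Mset_eq: "Mset b c act x0 l = {f \<in> Kp l. Mult f}"
  unfolding Mset_def Kset_eq using Mult_iff by blast


lemma E_bound: assumes "f \<in> Kp l" shows "l \<le> E x0"
proof -
  have "0 \<le> Sf f x0" by (rule Sf_nonneg) (use assms in \<open>auto simp: Kp_def\<close>)
  then show ?thesis using assms by (auto simp: Kp_def)
qed

lemma inv_min:
  assumes "\<And>z x. \<phi> (act z x) = (\<phi> x :: real)"
  shows "\<exists>y. \<forall>x. \<phi> y \<le> \<phi> x"
proof -
  obtain F where F: "finite F" "\<And>x. \<exists>z. \<exists>y\<in>F. x = act z y" using cocompact by blast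
  then have ne: "F \<noteq> {}" by blast
  have "Min (\<phi> ` F) \<in> \<phi> ` F" using F ne by auto
  then obtain y where y: "y \<in> F" "\<phi> y = Min (\<phi> ` F)" by (metis imageE)
  have "\<phi> y \<le> \<phi> x" for x
  proof -
    obtain z y' where "y' \<in> F" "x = act z y'" using F by blast
    then show ?thesis using y F(1) assms by auto
  qed
  then show ?thesis by blast
qed

lemma harnack1:
  "\<exists>C. \<forall>f l. (\<forall>x. 0 \<le> f x) \<and> f x0 = 1 \<and> (\<forall>x. Sf f x \<le> (E x - l) * f x) \<and> L \<le> l \<longrightarrow> f y \<le> C"
  using connected[of x0 y]
proof (induction rule: rtrancl_induct)
  case base
  then show ?case by (intro exI[of _ 1]) auto
next
  case (step u v)
  then obtain C where C: "\<forall>f l. (\<forall>x. 0 \<le> f x) \<and> f x0 = 1 \<and> (\<forall>x. Sf f x \<le> (E x - l) * f x) \<and> L \<le> l \<longrightarrow> f u \<le> C"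
    by blast
  show ?case
  proof (cases "u = v")
    case True then show ?thesis using C by blast
  next
    case False
    with step have bp: "0 < BB u v" by (simp add: BB_def)
    show ?thesis
    proof (intro exI[of _ "max 0 (E u - L) * max 0 C / BB u v"] allI impI)
      fix f l assume H: "(\<forall>x. 0 \<le> f x) \<and> f x0 = 1 \<and> (\<forall>x. Sf f x \<le> (E x - l) * f x) \<and> L \<le> l"
      then have fu: "0 \<le> f u" "f u \<le> C" using C by auto
      have "BB u v * f v \<le> Sf f u" by (rule Sf_single) (use H in auto)
      also have "\<dots> \<le> (E u - l) * f u" using H by auto
      also have "\<dots> \<le> (E u - L) * f u" using H fu by (intro mult_right_mono) auto
      also have "\<dots> \<le> max 0 (E u - L) * max 0 C"
        using fu by (intro mult_mono) auto
      finally show "f v \<le> max 0 (E u - L) * max 0 C / BB u v"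
        using bp by (simp add: field_simps mult.commute)
    qed
  qed
qed

lemma harnack:
  "\<exists>C. \<forall>y f l. (\<forall>x. 0 \<le> f x) \<and> f x0 = 1 \<and> (\<forall>x. Sf f x \<le> (E x - l) * f x) \<and> L \<le> l \<longrightarrow> f y \<le> C y"
proof -
  have "\<forall>y. \<exists>C. \<forall>f l. (\<forall>x. 0 \<le> f x) \<and> f x0 = 1 \<and> (\<forall>x. Sf f x \<le> (E x - l) * f x) \<and> L \<le> l \<longrightarrow> f y \<le> C"
    using harnack1[of L] by blast
  from choice[OF this] show ?thesis by blast
qed

lemma compact_box: "compact {f::'x\<Rightarrow>real. \<forall>x. f x \<in> {0..C x}}"
proof -
  have "{f::'x\<Rightarrow>real. \<forall>x. f x \<in> {0..C x}} = PiE UNIV (\<lambda>x. {0..C x})"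
    by (auto simp: PiE_def Pi_def extensional_def)
  moreover have "compactin (product_topology (\<lambda>_. euclidean) UNIV) (PiE UNIV (\<lambda>x. {0..C x::real}))"
    by (simp add: compactin_PiE)
  ultimately show ?thesis by (simp add: euclidean_product_topology)
qed

end

context ctx begin

definition ev :: "'d \<Rightarrow> int^'d" where "ev i = (\<chi> j. if j = i then 1 else 0)"
definition lin :: "real^'d \<Rightarrow> int^'d \<Rightarrow> real" where
  "lin a z = (\<Sum>i\<in>UNIV. a $ i * real_of_int (z $ i))"

lemma additive_lin:
  fixes g :: "int^'d \<Rightarrow> real"
  assumes add: "\<And>z w. g (z + w) = g z + g w"
  shows "g z = lin (\<chi> i. g (ev i)) z"
proof -
  have g0: "g 0 = 0" using add[of 0 0] by simp
  have gneg: "g (- v) = - g v" for v using add[of v "-v"] g0 by simp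
  define sv :: "'d \<Rightarrow> int \<Rightarrow> int^'d" where "sv i k = (\<chi> j. if j = i then k else (0::int))" for i k
  have svn: "g (sv i (int n)) = real n * g (ev i)" for i n
  proof (induction n)
    case 0
    have "sv i 0 = 0" by (simp add: sv_def vec_eq_iff)
    then show ?case using g0 by simp
  next
    case (Suc n)
    have "sv i (int (Suc n)) = sv i (int n) + ev i" by (simp add: sv_def ev_def vec_eq_iff)
    then show ?case using Suc add by (simp add: algebra_simps)
  qed
  have svk: "g (sv i k) = real_of_int k * g (ev i)" for i k
  proof (cases "0 \<le> k")
    case True
    then obtain n where "k = int n" using nonneg_eq_int by blast
    then show ?thesis using svn by simp
  next
    case False
    then have "0 \<le> - k" by simp
    then obtain n where "- k = int n" using nonneg_eq_int by blast
    then have n: "k = - int n" by simp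
    have "sv i k = - sv i (int n)" by (simp add: sv_def vec_eq_iff n)
    then show ?thesis using svn gneg n by simp
  qed
  have gs: "g (\<Sum>i\<in>A. v i) = (\<Sum>i\<in>A. g (v i))" if "finite A" for A v
    using that by (induction A rule: finite_induct) (auto simp: g0 add)
  have "z = (\<Sum>i\<in>UNIV. sv i (z $ i))"
    unfolding vec_eq_iff sv_def by simp
  then have "g z = g (\<Sum>i\<in>UNIV. sv i (z $ i))" by simp
  also have "\<dots> = (\<Sum>i\<in>UNIV. g (sv i (z $ i)))" by (rule gs) simp
  also have "\<dots> = lin (\<chi> i. g (ev i)) z" by (simp add: svk lin_def mult.commute)
  finally show ?thesis .
qed

lemma lin_ev: "lin a (ev j) = a $ j"
proof -
  have "lin a (ev j) = (\<Sum>i\<in>UNIV. if i = j then a $ j else 0)"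
    unfolding lin_def ev_def by (rule sum.cong) auto
  then show ?thesis by simp
qed

lemma lin_add: "lin a (z + w) = lin a z + lin a w"
  by (simp add: lin_def sum.distrib algebra_simps)

definition MM :: "('x \<Rightarrow> real) set" where "MM = {f. \<exists>l. f \<in> Kp l \<and> Mult f}"

lemma rho_eq:
  assumes "f \<in> Kp l" "Mult f"
  shows "rho act f = (\<chi> i. ln (f (act (ev i) x0)))"
    and "\<And>z. f (act z x0) = exp (lin (rho act f) z)"
proof -
  have m': "\<And>z x. f (act z x) = f (act z x0) * f x" using assms(2) unfolding Mult_def by blast
  have pos: "\<And>x. 0 < f x" using Kp_pos[OF assms(1)] .
  have x0: "f x0 = 1" using assms by (simp add: Kp_def)
  define a where "a = (\<chi> i. ln (f (act (ev i) x0)))"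
  have "is_character (\<lambda>z. f (act z x0))"
    unfolding is_character_def using pos m' act_add by metis
  then have mult: "multiplicative act f (\<lambda>z. f (act z x0))"
    using m' unfolding multiplicative_def by blast
  have lnadd: "ln (f (act (z + w) x0)) = ln (f (act z x0)) + ln (f (act w x0))" for z w
    using m'[of z "act w x0"] pos[of "act z x0"] pos[of "act w x0"] by (simp add: act_add ln_mult)
  have lnf: "ln (f (act z x0)) = lin a z" for z
    unfolding a_def by (rule additive_lin[of "\<lambda>z. ln (f (act z x0))", OF lnadd])
  have "rho act f = a"
    unfolding rho_def
  proof (rule the_equality)
    show "\<exists>\<gamma>. multiplicative act f \<gamma> \<and> (\<forall>z. ln (\<gamma> z) = (\<Sum>i\<in>UNIV. a $ i * real_of_int (z $ i)))"
    proof (intro exI conjI allI)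
      show "multiplicative act f (\<lambda>z. f (act z x0))" by (rule mult)
      show "ln (f (act z x0)) = (\<Sum>i\<in>UNIV. a $ i * real_of_int (z $ i))" for z
        using lnf[of z] unfolding lin_def .
    qed
  next
    fix a' assume "\<exists>\<gamma>. multiplicative act f \<gamma> \<and> (\<forall>z. ln (\<gamma> z) = (\<Sum>i\<in>UNIV. a' $ i * real_of_int (z $ i)))"
    then obtain \<gamma> where g: "multiplicative act f \<gamma>" "\<And>z. ln (\<gamma> z) = lin a' z"
      unfolding lin_def by blast
    have "\<gamma> z = f (act z x0)" for z using g(1) x0 unfolding multiplicative_def by simp
    then have "lin a' z = lin a z" for z using g(2)[of z] lnf[of z] by simp
    then have "lin a' (ev i) = lin a (ev i)" for i by blast
    then show "a' = a" by (simp add: lin_ev vec_eq_iff)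
  qed
  then show "rho act f = (\<chi> i. ln (f (act (ev i) x0)))" by (simp add: a_def)
  show "f (act z x0) = exp (lin (rho act f) z)" for z
  proof -
    have "f (act z x0) = exp (ln (f (act z x0)))" using pos[of "act z x0"] by simp
    then show ?thesis using lnf[of z] \<open>rho act f = a\<close> by simp
  qed
qed

lemma rho_eqI:
  assumes "f \<in> Kp l" "Mult f" "\<And>z. f (act z x0) = exp (lin a z)"
  shows "rho act f = a"
proof -
  have "ln (f (act (ev i) x0)) = a $ i" for i using assms(3) by (simp add: lin_ev)
  then show ?thesis using rho_eq(1)[OF assms(1,2)] by (simp add: vec_eq_iff)
qed


end

context ctx begin


lemma ratio_min:
  assumes f: "f \<in> Kp l" "Mult f" and g: "g \<in> Kp m" "Mult g" and eq: "\<And>z. f (act z x0) = g (act z x0)"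
  shows "\<exists>y t. 0 < t \<and> (\<forall>x. t * g x \<le> f x) \<and> f y = t * g y"
proof -
  have fp: "\<And>x. 0 < f x" using Kp_pos[OF f(1)] .
  have gp: "\<And>x. 0 < g x" using Kp_pos[OF g(1)] .
  have mf: "\<And>z x. f (act z x) = f (act z x0) * f x" using f(2) unfolding Mult_def by blast
  have mg: "\<And>z x. g (act z x) = g (act z x0) * g x" using g(2) unfolding Mult_def by blast
  have "(\<lambda>x. f x / g x) (act z x) = (\<lambda>x. f x / g x) x" for z x
    using mf[of z x] mg[of z x] eq[of z] gp[of "act z x0"] by simp
  then obtain y where y: "\<And>x. f y / g y \<le> f x / g x" using inv_min[of "\<lambda>x. f x / g x"] by blast
  define t where "t = f y / g y"
  have "t * g x \<le> f x" for x using y[of x] gp[of x] by (simp add: t_def pos_le_divide_eq)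
  moreover have "f y = t * g y" using gp[of y] by (simp add: t_def)
  moreover have "0 < t" using fp gp by (simp add: t_def)
  ultimately show ?thesis by blast
qed

lemma ev_le:
  assumes f: "f \<in> Kp l" "Mult f" and g: "g \<in> Kp m" "Mult g" and eq: "\<And>z. f (act z x0) = g (act z x0)"
  shows "l \<le> m"
proof -
  obtain y t where t: "0 < t" "\<And>x. t * g x \<le> f x" "f y = t * g y"
    using ratio_min[OF assms] by blast
  have "Sf (\<lambda>x. t * g x) y \<le> Sf f y" by (rule Sf_mono) (rule t(2))
  then have "t * ((E y - m) * g y) \<le> (E y - l) * f y"
    using f(1) g(1) by (simp add: Sf_scale Kp_def)
  then have "(E y - m) * f y \<le> (E y - l) * f y" using t(3) by (simp add: algebra_simps)
  then show ?thesis using Kp_pos[OF f(1), of y] by (simp add: mult_le_cancel_right)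
qed

lemma M_inj:
  assumes f: "f \<in> Kp l" "Mult f" and g: "g \<in> Kp m" "Mult g" and eq: "\<And>z. f (act z x0) = g (act z x0)"
  shows "f = g \<and> l = m"
proof -
  have lm: "l = m" using ev_le[OF f g eq] ev_le[OF g f eq[symmetric]] by simp
  obtain y t where t: "0 < t" "\<And>x. t * g x \<le> f x" "f y = t * g y"
    using ratio_min[OF assms] by blast
  define h where "h x = f x - t * g x" for x
  have hn: "0 \<le> h x" for x using t(2)[of x] by (simp add: h_def)
  have "Sf h x = (E x - l) * h x" for x
  proof -
    have "Sf f x = (E x - l) * f x" "Sf g x = (E x - l) * g x" using f(1) g(1) lm by (auto simp: Kp_def)
    moreover have "Sf h x = Sf f x - t * Sf g x" unfolding h_def by (simp add: Sf_diff Sf_scale)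
    ultimately have "Sf h x = (E x - l) * f x - t * ((E x - l) * g x)" by simp
    then show ?thesis by (simp add: h_def algebra_simps)
  qed
  then have h0: "h x = 0" for x using hn t(3) by (intro zero_prop[of h l y x]) (auto simp: h_def)
  then have "t = 1" using h0[of x0] f(1) g(1) by (simp add: h_def Kp_def)
  then have "f = g" using h0 by (auto simp: h_def)
  then show ?thesis using lm by simp
qed


end

context ctx begin


lemma act_uniq: "act z y = act z' y \<Longrightarrow> z = z'"
proof -
  assume h: "act z y = act z' y"
  have "act (- z' + z) y = act (- z') (act z y)" by (rule act_add)
  then have "act (- z' + z) y = y" using h by simp
  then have "- z' + z = 0" by (rule act_free)
  then show "z = z'" by (simp add: add.commute eq_neg_iff_add_eq_0 neg_eq_iff_add_eq_0)
qed

definition gam :: "real^'d \<Rightarrow> int^'d \<Rightarrow> real" where "gam a z = exp (lin a z)"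
definition Vs :: "real^'d \<Rightarrow> ('x \<Rightarrow> real) set" where
  "Vs a = {f. \<forall>z x. f (act z x) = gam a z * f x}"

lemma gam_add: "gam a (z + w) = gam a z * gam a w"
  by (simp add: gam_def lin_add exp_add)
lemma gam_pos: "0 < gam a z" by (simp add: gam_def)

lemma Sf_Vs: assumes "f \<in> Vs a" shows "(\<lambda>x. Sf f x) \<in> Vs a"
proof -
  have "Sf f (act z x) = gam a z * Sf f x" for z x
  proof -
    have "(\<lambda>v. f (act z v)) = (\<lambda>v. gam a z * f v)" using assms by (auto simp: Vs_def)
    then show ?thesis using Sf_act[of f z x] by (simp add: Sf_scale)
  qed
  then show ?thesis by (simp add: Vs_def)
qed

definition Tm :: "real^'d \<Rightarrow> 'x \<Rightarrow> 'x \<Rightarrow> real" where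
  "Tm a y x = (if \<exists>z. act z y = x then gam a (THE z. act z y = x) else 0)"

lemma Tm_act: "Tm a y (act w x) = gam a w * Tm a y x"
proof (cases "\<exists>z. act z y = x")
  case True
  then obtain z where z: "act z y = x" by blast
  have t1: "(THE z. act z y = x) = z" using z act_uniq by blast
  have e2: "act (w + z) y = act w x" using z by (simp add: act_add)
  have t2: "(THE z'. act z' y = act w x) = w + z" using e2 act_uniq by (metis (mono_tags, lifting) the_equality)
  show ?thesis using True e2 t1 t2 unfolding Tm_def by (auto simp: gam_add)
next
  case False
  have "\<not> (\<exists>z'. act z' y = act w x)"
  proof
    assume "\<exists>z'. act z' y = act w x"
    then obtain z' where h: "act z' y = act w x" by blast
    have "act (- w + z') y = act (- w) (act z' y)" by (rule act_add)
    then have "act (- w + z') y = x" using h by simp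
    then show False using False by blast
  qed
  then show ?thesis using False unfolding Tm_def by simp
qed

lemma Tm_nonneg: "0 \<le> Tm a y x" by (simp add: Tm_def gam_pos less_imp_le)

lemma exists_pos_V: "\<exists>u. u \<in> Vs a \<and> (\<forall>x. 0 < u x)"
proof -
  obtain F where F: "finite F" "\<And>x. \<exists>z. \<exists>y\<in>F. x = act z y" using cocompact by blast
  define u where "u x = (\<Sum>y\<in>F. Tm a y x)" for x
  have "u \<in> Vs a" by (simp add: Vs_def u_def Tm_act sum_distrib_left)
  moreover have "0 < u x" for x
  proof -
    obtain z y where zy: "y \<in> F" "x = act z y" using F by blast
    then have "0 < Tm a y x" unfolding Tm_def using gam_pos by auto
    also have "\<dots> \<le> u x" unfolding u_def using F(1) zy(1)
      by (intro member_le_sum) (auto simp: Tm_nonneg)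
    finally show ?thesis .
  qed
  ultimately show ?thesis by blast
qed


end

context ctx begin


lemma Vs_scale: "f \<in> Vs a \<Longrightarrow> (\<lambda>x. k * f x) \<in> Vs a"
  by (simp add: Vs_def)

lemma start_point: "\<exists>f l1. f \<in> Vs a \<and> (\<forall>x. 0 \<le> f x) \<and> f x0 = 1 \<and> (\<forall>x. Sf f x \<le> (E x - l1) * f x)"
proof -
  obtain u where u: "u \<in> Vs a" "\<And>x. 0 < u x" using exists_pos_V by blast
  define f where "f x = u x / u x0" for x
  have fV: "f \<in> Vs a" unfolding f_def using Vs_scale[OF u(1), of "1 / u x0"] by simp
  have fp: "0 < f x" for x using u(2) by (simp add: f_def)
  have SfV: "Sf f (act z x) = gam a z * Sf f x" for z x using Sf_Vs[OF fV] by (simp add: Vs_def)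
  have fV': "f (act z x) = gam a z * f x" for z x using fV by (simp add: Vs_def)
  have "(\<lambda>x. E x - Sf f x / f x) (act z x) = (\<lambda>x. E x - Sf f x / f x) x" for z x
    using SfV[of z x] fV'[of z x] gam_pos[of a z] by simp
  then obtain y where y: "\<And>x. E y - Sf f y / f y \<le> E x - Sf f x / f x"
    using inv_min[of "\<lambda>x. E x - Sf f x / f x"] by blast
  have "Sf f x \<le> (E x - (E y - Sf f y / f y)) * f x" for x
  proof -
    have "Sf f x / f x \<le> E x - (E y - Sf f y / f y)" using y[of x] by simp
    then show ?thesis using fp[of x] by (simp add: pos_divide_le_eq)
  qed
  moreover have "f x0 = 1" using u(2)[of x0] by (simp add: f_def)
  ultimately show ?thesis using fV fp less_imp_le by blast
qed

definition Qs :: "real^'d \<Rightarrow> real \<Rightarrow> (('x \<Rightarrow> real) \<times> real) set" where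
  "Qs a l1 = {p. fst p \<in> Vs a \<and> (\<forall>x. 0 \<le> fst p x) \<and> fst p x0 = 1 \<and>
       (\<forall>x. Sf (fst p) x \<le> (E x - snd p) * fst p x) \<and> l1 \<le> snd p}"

lemma compact_Qs: "compact (Qs a l1)"
proof -
  obtain C where C: "\<And>y f l. (\<forall>x. 0 \<le> f x) \<and> f x0 = 1 \<and> (\<forall>x. Sf f x \<le> (E x - l) * f x) \<and> l1 \<le> l \<Longrightarrow> f y \<le> C y"
    using harnack[of l1] by blast
  define K where "K = {f::'x\<Rightarrow>real. \<forall>x. f x \<in> {0..C x}} \<times> {l1..E x0}"
  have cK: "compact K" unfolding K_def by (intro compact_Times compact_box compact_Icc)
  have sub: "Qs a l1 \<subseteq> K"
  proof
    fix p assume p: "p \<in> Qs a l1"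
    have "0 \<le> Sf (fst p) x0" by (rule Sf_nonneg) (use p in \<open>auto simp: Qs_def\<close>)
    moreover have "Sf (fst p) x0 \<le> (E x0 - snd p) * fst p x0" "fst p x0 = 1" using p unfolding Qs_def by blast+
    ultimately have "snd p \<le> E x0" by simp
    moreover have "fst p y \<le> C y" for y by (rule C) (use p in \<open>auto simp: Qs_def\<close>)
    ultimately show "p \<in> K" using p by (auto simp: Qs_def K_def mem_Times_iff)
  qed
  have cf: "continuous_on UNIV (\<lambda>p::('x\<Rightarrow>real)\<times>real. fst p y)" for y
    by (rule cont_app) (intro continuous_intros)
  have cS: "continuous_on UNIV (\<lambda>p::('x\<Rightarrow>real)\<times>real. Sf (fst p) y)" for y
    by (rule cont_Sf) (intro continuous_intros)
  have cs: "continuous_on UNIV (\<lambda>p::('x\<Rightarrow>real)\<times>real. snd p)" by (intro continuous_intros)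
  have eq: "Qs a l1 = (\<Inter>z. \<Inter>x. {p. fst p (act z x) = gam a z * fst p x}) \<inter> (\<Inter>x. {p. 0 \<le> fst p x})
      \<inter> {p. fst p x0 = 1} \<inter> (\<Inter>x. {p. Sf (fst p) x \<le> (E x - snd p) * fst p x}) \<inter> {p. l1 \<le> snd p}"
    by (auto simp: Qs_def Vs_def)
  have "closed (Qs a l1)" unfolding eq
    by (intro closed_Int closed_INT ballI closed_Collect_le closed_Collect_eq cf cS cs
        continuous_on_const continuous_on_mult continuous_on_diff)
  then have "compact (K \<inter> Qs a l1)" using cK by (rule compact_Int_closed[rotated])
  moreover have "K \<inter> Qs a l1 = Qs a l1" using sub by blast
  ultimately show ?thesis by simp
qed


end

context ctx begin


lemma Vs_app: "f \<in> Vs a \<Longrightarrow> f (act z x) = gam a z * f x" by (simp add: Vs_def)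

lemma exists_eig: "\<exists>f l. f \<in> Vs a \<and> f \<in> Kp l"
proof -
  obtain f0 l1 where f0: "f0 \<in> Vs a" "\<And>x. 0 \<le> f0 x" "f0 x0 = 1" "\<And>x. Sf f0 x \<le> (E x - l1) * f0 x"
    using start_point[of a] by blast
  have ne: "Qs a l1 \<noteq> {}" using f0 by (auto simp: Qs_def intro!: exI[of _ "(f0, l1)"])
  have "\<exists>x\<in>Qs a l1. \<forall>y\<in>Qs a l1. snd y \<le> snd x"
    by (rule continuous_attains_sup[OF compact_Qs ne]) (intro continuous_intros)
  then obtain p where p: "p \<in> Qs a l1" and pmax: "\<And>q. q \<in> Qs a l1 \<Longrightarrow> snd q \<le> snd p"
    by blast
  define f where "f = fst p"
  define l where "l = snd p"
  have fV: "f \<in> Vs a" and fnn: "\<And>x. 0 \<le> f x" and fx0: "f x0 = 1"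
    and fsub: "\<And>x. Sf f x \<le> (E x - l) * f x" and l1l: "l1 \<le> l"
    using p by (auto simp: Qs_def f_def l_def)
  have fpos: "\<And>x. 0 < f x"
  proof -
    fix x
    have "f x \<noteq> 0"
    proof
      assume "f x = 0"
      then have "f x0 = 0" by (intro zero_prop[of f l x x0] fnn fsub)
      then show False using fx0 by simp
    qed
    then show "0 < f x" using fnn[of x] by simp
  qed
  have eqn: "\<forall>x. Sf f x = (E x - l) * f x"
  proof (rule ccontr)
    assume "\<not> (\<forall>x. Sf f x = (E x - l) * f x)"
    then obtain t0 where t0: "Sf f t0 \<noteq> (E t0 - l) * f t0" by blast
    define w where "w x = (E x - l) * f x - Sf f x" for x
    have wnn: "0 \<le> w x" for x using fsub[of x] by (simp add: w_def)
    have wt0: "0 < w t0" using t0 fsub[of t0] by (simp add: w_def)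
    have wV: "w \<in> Vs a"
      using fV Sf_Vs[OF fV] by (simp add: Vs_def w_def algebra_simps)
    obtain ym where ym: "\<And>x. - E ym \<le> - E x" using inv_min[of "\<lambda>x. - E x"] by auto
    define \<kappa> where "\<kappa> x = E ym + 1 - E x" for x
    have kp: "0 < \<kappa> x" for x using ym[of x] by (simp add: \<kappa>_def)
    have kinv: "\<kappa> (act z x) = \<kappa> x" for z x by (simp add: \<kappa>_def)
    define s where "s = E ym + 1 - l"
    define A where "A g x = Sf g x + \<kappa> x * g x" for g :: "'x \<Rightarrow> real" and x
    have A_lin: "A (\<lambda>x. s * g x - h x) x = s * A g x - A h x" for g h x
      by (simp add: A_def Sf_diff Sf_scale algebra_simps)
    have A_V: "g \<in> Vs a \<Longrightarrow> A g \<in> Vs a" for g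
      using Sf_Vs[of g a] kinv by (simp add: Vs_def A_def algebra_simps)
    have A_nn: "(\<And>x. 0 \<le> g x) \<Longrightarrow> \<kappa> x * g x \<le> A g x" for g x
      using Sf_nonneg[of g x] by (simp add: A_def)
    have A_single: "(\<And>x. 0 \<le> g x) \<Longrightarrow> BB x y * g y \<le> A g x" for g x y
      using Sf_single[of g x y] kp[of x] by (simp add: A_def) (smt (verit) mult_nonneg_nonneg)
    have P1: "(A ^^ k) f \<in> Vs a \<and> (A ^^ k) w \<in> Vs a \<and> (\<forall>x. 0 \<le> (A ^^ k) w x) \<and> (\<forall>x. 0 < (A ^^ k) f x)" for k
    proof (induction k)
      case 0
      then show ?case using fV wV wnn fpos by simp
    next
      case (Suc k)
      have a1: "0 \<le> A ((A ^^ k) w) x" for x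
        using A_nn[of "(A ^^ k) w" x] Suc kp[of x] by (smt (verit) mult_nonneg_nonneg)
      have a2: "0 < A ((A ^^ k) f) x" for x
      proof -
        have "0 < \<kappa> x * (A ^^ k) f x" using Suc kp[of x] by simp
        also have "\<dots> \<le> A ((A ^^ k) f) x" using Suc by (intro A_nn) (simp add: less_imp_le)
        finally show ?thesis .
      qed
      show ?case using Suc A_V a1 a2 by simp
    qed
    have P2: "A ((A ^^ k) f) x = s * (A ^^ k) f x - (A ^^ k) w x" for k x
    proof (induction k arbitrary: x)
      case 0
      then show ?case by (simp add: A_def s_def w_def \<kappa>_def algebra_simps)
    next
      case (Suc k)
      have "A ((A ^^ k) f) = (\<lambda>x. s * (A ^^ k) f x - (A ^^ k) w x)" using Suc by auto
      then show ?case using A_lin by simp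
    qed
    let ?R = "{(u, v). 0 < b u v}"
    have P3: "\<forall>j x. j \<le> k \<longrightarrow> (x, t0) \<in> ?R ^^ j \<longrightarrow> 0 < (A ^^ k) w x" for k
    proof (induction k)
      case 0
      then show ?case using wt0 by auto
    next
      case (Suc k)
      show ?case
      proof (intro allI impI)
        fix j x assume j: "j \<le> Suc k" and jx: "(x, t0) \<in> ?R ^^ j"
        have nnk: "\<And>x. 0 \<le> (A ^^ k) w x" using P1 by blast
        show "0 < (A ^^ Suc k) w x"
        proof (cases "j \<le> k")
          case True
          then have "0 < (A ^^ k) w x" using Suc jx by blast
          then have "0 < \<kappa> x * (A ^^ k) w x" using kp[of x] by simp
          also have "\<dots> \<le> A ((A ^^ k) w) x" by (rule A_nn) (rule nnk)
          finally show ?thesis by simp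
        next
          case False
          then have "j = Suc k" using j by simp
          then have "(x, t0) \<in> ?R ^^ Suc k" using jx by simp
          from relpow_Suc_D2[OF this] obtain y where xy: "(x, y) \<in> ?R" and yt: "(y, t0) \<in> ?R ^^ k"
            by blast
          have py: "0 < (A ^^ k) w y" using Suc yt by blast
          show ?thesis
          proof (cases "x = y")
            case True
            then have "0 < \<kappa> x * (A ^^ k) w x" using kp[of x] py by simp
            also have "\<dots> \<le> A ((A ^^ k) w) x" by (rule A_nn) (rule nnk)
            finally show ?thesis by simp
          next
            case False
            then have "0 < BB x y" using xy by (simp add: BB_def)
            then have "0 < BB x y * (A ^^ k) w y" using py by simp
            also have "\<dots> \<le> A ((A ^^ k) w) x" by (rule A_single) (rule nnk)
            finally show ?thesis by simp
          qed
        qed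
      qed
    qed
    obtain F where F: "finite F" "\<And>x. \<exists>z. \<exists>y\<in>F. x = act z y" using cocompact by blast
    have "\<forall>y. \<exists>n. (y, t0) \<in> ?R ^^ n" using connected rtrancl_power by blast
    then obtain nn where nn: "\<And>y. (y, t0) \<in> ?R ^^ nn y" by metis
    define N where "N = Max (nn ` F)"
    have wNF: "0 < (A ^^ N) w y" if "y \<in> F" for y
    proof -
      have "nn y \<le> N" unfolding N_def using that F(1) by simp
      then show ?thesis using P3[of N] nn[of y] by blast
    qed
    have wN: "0 < (A ^^ N) w x" for x
    proof -
      obtain z y where "y \<in> F" "x = act z y" using F by blast
      moreover have "(A ^^ N) w \<in> Vs a" using P1[of N] by blast
      ultimately show ?thesis using wNF[of y] gam_pos[of a z] Vs_app[of "(A ^^ N) w" a z y] by simp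
    qed
    define g where "g = (A ^^ N) f"
    have gV: "g \<in> Vs a" and gp: "\<And>x. 0 < g x" using P1[of N] by (auto simp: g_def)
    have gS: "Sf g x = (E x - l) * g x - (A ^^ N) w x" for x
      using P2[of N x] by (simp add: g_def A_def s_def \<kappa>_def algebra_simps)
    have SgV: "Sf g (act z x) = gam a z * Sf g x" for z x using Sf_Vs[OF gV] by (simp add: Vs_def)
    have "(\<lambda>x. E x - Sf g x / g x) (act z x) = (\<lambda>x. E x - Sf g x / g x) x" for z x
      using SgV[of z x] Vs_app[OF gV, of z x] gam_pos[of a z] by simp
    then obtain y2 where y2: "\<And>x. E y2 - Sf g y2 / g y2 \<le> E x - Sf g x / g x"
      using inv_min[of "\<lambda>x. E x - Sf g x / g x"] by blast
    define l' where "l' = E y2 - Sf g y2 / g y2"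
    have "l < l'"
    proof -
      have "Sf g y2 < (E y2 - l) * g y2" using gS[of y2] wN[of y2] by simp
      then have "Sf g y2 / g y2 < E y2 - l" using gp[of y2] by (simp add: pos_divide_less_eq)
      then show ?thesis by (simp add: l'_def)
    qed
    have gsub: "Sf g x \<le> (E x - l') * g x" for x
    proof -
      have "Sf g x / g x \<le> E x - l'" using y2[of x] by (simp add: l'_def)
      then show ?thesis using gp[of x] by (simp add: pos_divide_le_eq)
    qed
    define g' where "g' x = g x / g x0" for x
    have "(g', l') \<in> Qs a l1"
    proof -
      have "g' \<in> Vs a" unfolding g'_def using Vs_scale[OF gV, of "1 / g x0"] by simp
      moreover have "0 \<le> g' x" for x using gp[of x] gp[of x0] by (simp add: g'_def)
      moreover have "g' x0 = 1" using gp[of x0] by (simp add: g'_def)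
      moreover have "Sf g' x \<le> (E x - l') * g' x" for x
      proof -
        have "Sf g' x = Sf g x / g x0" unfolding g'_def using Sf_scale[of "1 / g x0" g x] by simp
        moreover have "Sf g x / g x0 \<le> (E x - l') * g x / g x0"
          using gsub[of x] gp[of x0] by (simp add: divide_right_mono)
        ultimately show ?thesis by (simp add: g'_def)
      qed
      moreover have "l1 \<le> l'" using l1l \<open>l < l'\<close> by simp
      ultimately show ?thesis by (simp add: Qs_def)
    qed
    then have "l' \<le> l" using pmax l_def by fastforce
    then show False using \<open>l < l'\<close> by simp
  qed
  have "f \<in> Kp l" using fnn fx0 eqn by (simp add: Kp_def)
  then show ?thesis using fV by blast
qed


end

context ctx begin


lemma exists_rho: "\<exists>f l. f \<in> Kp l \<and> Mult f \<and> rho act f = a"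
proof -
  obtain f l where f: "f \<in> Vs a" "f \<in> Kp l" using exists_eig[of a] by blast
  have fx0: "f x0 = 1" using f(2) by (simp add: Kp_def)
  have g: "f (act z x0) = gam a z" for z using Vs_app[OF f(1), of z x0] fx0 by simp
  have "Mult f" unfolding Mult_def using Vs_app[OF f(1)] g by simp
  moreover have "rho act f = a" using rho_eqI[OF f(2) \<open>Mult f\<close>] g by (simp add: gam_def)
  ultimately show ?thesis using f(2) by blast
qed

lemma lin_bound: assumes "norm a \<le> R" shows "lin a z \<le> R * (\<Sum>i\<in>UNIV. \<bar>real_of_int (z $ i)\<bar>)"
proof -
  have "lin a z \<le> (\<Sum>i\<in>UNIV. \<bar>a $ i\<bar> * \<bar>real_of_int (z $ i)\<bar>)"
    unfolding lin_def by (intro sum_mono) (metis abs_ge_self abs_mult)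
  also have "\<dots> \<le> (\<Sum>i\<in>UNIV. R * \<bar>real_of_int (z $ i)\<bar>)"
    by (intro sum_mono mult_right_mono) (use assms component_le_norm_cart[of a] order_trans in auto)
  finally show ?thesis by (simp add: sum_distrib_left)
qed

lemma lower_bound: "\<exists>L. \<forall>f l. f \<in> Kp l \<and> Mult f \<and> norm (rho act f) \<le> R \<longrightarrow> L \<le> l"
proof -
  obtain F where F: "finite F" "\<And>x. \<exists>z. \<exists>y\<in>F. x = act z y" using cocompact by blast
  then obtain zz ww where zw: "\<And>x. ww x \<in> F \<and> x = act (zz x) (ww x)" by metis
  have Fne: "F \<noteq> {}" using F by blast
  define M where "M y = (\<Sum>v\<in>nb y. BB y v * exp (R * (\<Sum>i\<in>UNIV. \<bar>real_of_int (zz v $ i)\<bar>)))" for y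
  define L where "L = Min ((\<lambda>y. E y - M y) ` F)"
  have "L \<le> l" if f: "f \<in> Kp l" "Mult f" "norm (rho act f) \<le> R" for f l
  proof -
    have "Max (f ` F) \<in> f ` F" using F(1) Fne by simp
    then obtain y1 where y1: "y1 \<in> F" "f y1 = Max (f ` F)" by (metis imageE)
    have y1max: "f y \<le> f y1" if "y \<in> F" for y using y1 F(1) that by simp
    have fp: "\<And>x. 0 < f x" using Kp_pos[OF f(1)] .
    have mf: "\<And>z x. f (act z x) = f (act z x0) * f x" using f(2) unfolding Mult_def by blast
    have fv: "f v \<le> exp (R * (\<Sum>i\<in>UNIV. \<bar>real_of_int (zz v $ i)\<bar>)) * f y1" for v
    proof -
      have "f v = f (act (zz v) x0) * f (ww v)" using mf zw by metis
      also have "\<dots> = exp (lin (rho act f) (zz v)) * f (ww v)" using rho_eq(2)[OF f(1,2)] by simp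
      also have "\<dots> \<le> exp (R * (\<Sum>i\<in>UNIV. \<bar>real_of_int (zz v $ i)\<bar>)) * f y1"
        using lin_bound[OF f(3), of "zz v"] y1max[of "ww v"] zw[of v] fp[of "ww v"]
        by (intro mult_mono) auto
      finally show ?thesis .
    qed
    have "Sf f y1 \<le> M y1 * f y1"
      unfolding Sf_def M_def sum_distrib_right
      by (intro sum_mono) (use fv BB_nonneg in \<open>simp add: mult.assoc mult_left_mono\<close>)
    moreover have "Sf f y1 = (E y1 - l) * f y1" using f(1) by (simp add: Kp_def)
    ultimately have "E y1 - l \<le> M y1" using fp[of y1] by (simp add: mult_le_cancel_right)
    moreover have "L \<le> E y1 - M y1" unfolding L_def using F(1) y1(1) by simp
    ultimately show ?thesis by simp
  qed
  then show ?thesis by blast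
qed

definition lam :: "('x \<Rightarrow> real) \<Rightarrow> real" where "lam f = E x0 - Sf f x0"

lemma lam_eq: "f \<in> Kp l \<Longrightarrow> lam f = l"
  by (simp add: Kp_def lam_def)

lemma MI_eq: "MI b c act x0 I = {f. \<exists>l\<in>I. f \<in> Kp l \<and> Mult f}"
  by (auto simp: MI_def Mset_eq)

lemma compact_MI: "compact {f. \<exists>l\<in>{l1..l2}. f \<in> Kp l \<and> Mult f}"
proof -
  obtain C where C: "\<And>y f l. (\<forall>x. 0 \<le> f x) \<and> f x0 = 1 \<and> (\<forall>x. Sf f x \<le> (E x - l) * f x) \<and> l1 \<le> l \<Longrightarrow> f y \<le> C y"
    using harnack[of l1] by blast
  define K where "K = {f::'x\<Rightarrow>real. \<forall>x. f x \<in> {0..C x}}"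
  define S where "S = {f. \<exists>l\<in>{l1..l2}. f \<in> Kp l \<and> Mult f}"
  have eq: "S = (\<Inter>x. {f. 0 \<le> f x}) \<inter> {f. f x0 = 1} \<inter> (\<Inter>x. {f. Sf f x = (E x - lam f) * f x})
     \<inter> {f. l1 \<le> lam f} \<inter> {f. lam f \<le> l2} \<inter> (\<Inter>z. \<Inter>x. {f. f (act z x) = f (act z x0) * f x})"
  proof (intro equalityI subsetI)
    fix f assume "f \<in> S"
    then obtain l where l: "l \<in> {l1..l2}" "f \<in> Kp l" "Mult f" by (auto simp: S_def)
    then show "f \<in> (\<Inter>x. {f. 0 \<le> f x}) \<inter> {f. f x0 = 1} \<inter> (\<Inter>x. {f. Sf f x = (E x - lam f) * f x})
     \<inter> {f. l1 \<le> lam f} \<inter> {f. lam f \<le> l2} \<inter> (\<Inter>z. \<Inter>x. {f. f (act z x) = f (act z x0) * f x})"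
    proof -
      have "\<forall>x. Sf f x = (E x - lam f) * f x" using l(2) lam_eq[OF l(2)] by (simp add: Kp_def)
      moreover have "l1 \<le> lam f" "lam f \<le> l2" using l(1) lam_eq[OF l(2)] by auto
      ultimately show ?thesis using l(2,3) unfolding Kp_def Mult_def Int_iff INT_iff mem_Collect_eq by blast
    qed
  next
    fix f assume "f \<in> (\<Inter>x. {f. 0 \<le> f x}) \<inter> {f. f x0 = 1} \<inter> (\<Inter>x. {f. Sf f x = (E x - lam f) * f x})
     \<inter> {f. l1 \<le> lam f} \<inter> {f. lam f \<le> l2} \<inter> (\<Inter>z. \<Inter>x. {f. f (act z x) = f (act z x0) * f x})"
    then have "f \<in> Kp (lam f)" "Mult f" "lam f \<in> {l1..l2}" unfolding Kp_def Mult_def Int_iff INT_iff mem_Collect_eq atLeastAtMost_iff by blast+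
    then show "f \<in> S" unfolding S_def by blast
  qed
  have c1: "continuous_on UNIV (\<lambda>f::'x\<Rightarrow>real. f y)" for y by simp
  have c2: "continuous_on UNIV (\<lambda>f::'x\<Rightarrow>real. Sf f y)" for y
    using cont_Sf[of UNIV "\<lambda>f. f" y] by simp
  have c3: "continuous_on UNIV lam" unfolding lam_def by (intro continuous_on_diff continuous_on_const c2)
  have cl: "closed S" unfolding eq
    by (intro closed_Int closed_INT ballI closed_Collect_le closed_Collect_eq c1 c2 c3 continuous_on_const
        continuous_on_mult continuous_on_diff)
  have sub: "S \<subseteq> K"
  proof
    fix f assume "f \<in> S"
    then obtain l where l: "l \<in> {l1..l2}" "f \<in> Kp l" by (auto simp: S_def)
    have "f y \<le> C y" for y by (rule C) (use l in \<open>auto simp: Kp_def\<close>)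
    then show "f \<in> K" using l by (auto simp: K_def Kp_def)
  qed
  have "compact (K \<inter> S)" using compact_box cl unfolding K_def by (rule compact_Int_closed)
  moreover have "K \<inter> S = S" using sub by blast
  ultimately show ?thesis by (simp add: S_def)
qed


end

context ctx begin


lemma main:
  "(\<exists>g. homeomorphism (MI b c act x0 {..lambda0 b c act x0}) UNIV (rho act) g)
     \<and> (\<forall>l. compact (MI b c act x0 {l..lambda0 b c act x0})
            \<and> compact (rho act ` MI b c act x0 {l..lambda0 b c act x0}))"
proof -
  define L0 where "L0 = lambda0 b c act x0"
  have bdd: "bdd_above {l. Mset b c act x0 l \<noteq> {}}"
    unfolding bdd_above_def using E_bound by (auto simp: Mset_eq)
  have le0: "l \<le> L0" if "f \<in> Kp l" "Mult f" for f l
  proof -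
    have "l \<in> {l. Mset b c act x0 l \<noteq> {}}" using that by (auto simp: Mset_eq)
    then show ?thesis unfolding L0_def lambda0_def using bdd by (rule cSup_upper)
  qed
  define MS where "MS = {f. \<exists>l. f \<in> Kp l \<and> Mult f}"
  have MSeq: "MI b c act x0 {..L0} = MS" unfolding MI_eq MS_def using le0 by auto
  have rho_cont_gen: "continuous_on S (rho act)" if "S \<subseteq> MS" for S
  proof -
    have "continuous_on S (\<lambda>f. \<chi> i. ln (f (act (ev i) x0)))"
    proof (intro continuous_on_vec_lambda continuous_on_ln ballI)
      fix i show "continuous_on S (\<lambda>f. f (act (ev i) x0))" by (rule cont_app) (rule continuous_on_id)
      fix f assume "f \<in> S"
      then have "f \<in> MS" using that by blast
      then obtain l where "f \<in> Kp l" unfolding MS_def by blast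
      from Kp_pos[OF this] show "f (act (ev i) x0) \<noteq> 0" by (metis less_irrefl)
    qed
    then show ?thesis
      by (rule continuous_on_eq) (use that rho_eq(1) in \<open>auto simp: MS_def\<close>)
  qed
  define g where "g a = (SOME f. f \<in> MS \<and> rho act f = a)" for a
  have gprop: "g a \<in> MS \<and> rho act (g a) = a" for a
  proof -
    have ex: "\<exists>f. f \<in> MS \<and> rho act f = a" using exists_rho[of a] unfolding MS_def by blast
    show ?thesis using someI_ex[OF ex] unfolding g_def .
  qed
  have ginv: "g (rho act f) = f" if "f \<in> MS" for f
  proof -
    obtain l where l: "f \<in> Kp l" "Mult f" using \<open>f \<in> MS\<close> unfolding MS_def by blast
    obtain m where m: "g (rho act f) \<in> Kp m" "Mult (g (rho act f))" using gprop[of "rho act f"] unfolding MS_def by blast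
    have "g (rho act f) (act z x0) = f (act z x0)" for z
      using rho_eq(2)[OF m] rho_eq(2)[OF l] gprop[of "rho act f"] by simp
    then show ?thesis using M_inj[OF m l] by blast
  qed
  have gcb: "continuous_on (cball 0 R) g" for R
  proof -
    obtain LR where LR: "\<And>f l. f \<in> Kp l \<Longrightarrow> Mult f \<Longrightarrow> norm (rho act f) \<le> R \<Longrightarrow> LR \<le> l"
      using lower_bound[of R] by blast
    define K0 where "K0 = {f. \<exists>l\<in>{LR..L0}. f \<in> Kp l \<and> Mult f}"
    have cK0: "compact K0" unfolding K0_def by (rule compact_MI)
    have K0MS: "K0 \<subseteq> MS" by (auto simp: K0_def MS_def)
    define K where "K = K0 \<inter> rho act -` cball 0 R"
    have "closed K" unfolding K_def
      by (intro continuous_closed_preimage rho_cont_gen K0MS compact_imp_closed cK0 closed_cball)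
    then have cK: "compact K" using compact_Int_closed[OF cK0, of K] by (simp add: K_def Int_absorb1)
    have img: "rho act ` K = cball 0 R"
    proof
      show "rho act ` K \<subseteq> cball 0 R" by (auto simp: K_def)
      show "cball 0 R \<subseteq> rho act ` K"
      proof
        fix a assume a: "a \<in> cball (0::real^'d) R"
        obtain l where l: "g a \<in> Kp l" "Mult (g a)" using gprop[of a] unfolding MS_def by blast
        have "LR \<le> l" using LR[OF l] gprop[of a] a by simp
        moreover have "l \<le> L0" using le0[OF l] .
        ultimately have "g a \<in> K" using l gprop[of a] a by (auto simp: K_def K0_def)
        then show "a \<in> rho act ` K" using gprop[of a] by (metis image_eqI)
      qed
    qed
    have KMS: "K \<subseteq> MS" using K0MS by (auto simp: K_def)
    have "continuous_on (rho act ` K) g"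
      by (rule continuous_on_inv[OF rho_cont_gen[OF KMS] cK]) (use KMS ginv in blast)
    then show ?thesis using img by simp
  qed
  have gcont: "continuous_on UNIV g"
  proof (rule continuous_at_imp_continuous_on, rule ballI)
    fix a :: "real^'d"
    have "a \<in> interior (cball 0 (norm a + 1))" by (simp add: interior_cball)
    then show "isCont g a" using continuous_on_interior[OF gcb] by blast
  qed
  have homeo: "homeomorphism MS UNIV (rho act) g"
    unfolding homeomorphism_def
  proof (intro conjI ballI)
    show "rho act ` MS = UNIV" using gprop by (metis UNIV_eq_I image_eqI)
    show "g ` UNIV = MS" using gprop ginv by (metis UNIV_I image_eqI subsetI subset_antisym image_subsetI)
  qed (use ginv gprop rho_cont_gen gcont in auto)
  have comp: "compact (MI b c act x0 {l..L0})" for l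
    unfolding MI_eq by (rule compact_MI)
  have comp2: "compact (rho act ` MI b c act x0 {l..L0})" for l
    by (intro compact_continuous_image comp rho_cont_gen) (auto simp: MI_eq MS_def)
  show ?thesis using homeo MSeq comp comp2 unfolding L0_def by auto
qed


end

theorem lemma14:
  fixes b :: "'x::countable \<Rightarrow> 'x \<Rightarrow> real" and c :: "'x \<Rightarrow> real"
    and act :: "int^'d \<Rightarrow> 'x \<Rightarrow> 'x" and x0 :: 'x
  assumes b_nonneg: "\<And>x y. 0 \<le> b x y"
    and b_summable: "\<And>x. (\<lambda>y. b x y) summable_on UNIV"
    and loc_finite: "\<And>x. finite {y. 0 < b x y \<or> 0 < b y x}"
    and connected: "\<And>x y. (x, y) \<in> {(u, v). 0 < b u v}\<^sup>*"
    and act_zero: "\<And>x. act 0 x = x"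
    and act_add: "\<And>z w x. act (z + w) x = act z (act w x)"
    and act_free: "\<And>z x. act z x = x \<Longrightarrow> z = 0"
    and cocompact: "\<exists>F. finite F \<and> (\<forall>x. \<exists>z. \<exists>y\<in>F. x = act z y)"
    and invariant: "Hinvariant b c act"
  shows "(\<exists>g. homeomorphism (MI b c act x0 {..lambda0 b c act x0}) UNIV (rho act) g)
     \<and> (\<forall>l. compact (MI b c act x0 {l..lambda0 b c act x0})
            \<and> compact (rho act ` MI b c act x0 {l..lambda0 b c act x0}))"
proof -
  interpret ctx b c act x0
    by (unfold_locales) (fact b_nonneg loc_finite connected act_zero act_add act_free cocompact invariant)+
  show ?thesis by (rule main)
qed

end
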